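(* Let the mesh, coefficients $a^{(n)}_{n-k}$, DCC kernels $p^{(n)}_{n-k}$ and consistency errors $R^n$ be as in the context (in particular $\tau_{n-1}\le\tau_n$ for $2\le n\le N$). Let $v\in C([0,T])\cap C^2((0,T])$ and suppose there are constants $c_v>0$ and $\sigma\in(0,1)\cup(1,2)$ with $|v''(t)|\le c_v(1+t^{\sigma-2})$ for $0<t\le T$. Then there is a constant $C>0$ depending only on $c_v$, $\sigma$ and $T$ such that for every $1\le n\le N$, $$\sum_{j=1}^n p^{(n)}_{n-j}|R^j|\le C\Big(\tau_1^{\sigma}+\frac{1}{1-\alpha}\max_{2\le j\le n}(t_{j-1/2}-t_{1/2})^{\alpha}\,t_{j-3/2}^{\sigma-2}\,\tau_{j-1/2}^{2-\alpha}\Big).$$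
   Context: Fix $T>0$, $0<\alpha<1$ and a mesh $0=t_0<t_1<\dots<t_N=T$ with step sizes $\tau_n=t_n-t_{n-1}$ satisfying $\tau_{n-1}\le\tau_n$ for $2\le n\le N$. Set $t_{-1/2}=t_0$, $t_{n-1/2}=t_{n-1}+\tau_n/2$ for $1\le n\le N$, $\tau_{1/2}=\tau_1/2$ and $\tau_{n-1/2}=(\tau_n+\tau_{n-1})/2$ for $n\ge 2$. Let $\omega_\gamma(t)=t^{\gamma-1}/\Gamma(\gamma)$ for $t>0$. For $1\le n\le N$ and $1\le k\le n$ define $$a^{(n)}_{n-k}=\frac{1}{\tau_{k-1/2}}\int_{t_{k-3/2}}^{t_{k-1/2}}\omega_{1-\alpha}(t_{n-1/2}-s)\,ds .$$ The discrete complementary convolution (DCC) kernels are defined by $p^{(n)}_0=1/a^{(n)}_0$ and $p^{(n)}_{n-k}=\frac{1}{a^{(k)}_0}\sum_{j=k+1}^n\big(a^{(j)}_{j-k-1}-a^{(j)}_{j-k}\big)p^{(n)}_{n-j}$ for $1\le k\le n-1$; equivalently $\sum_{j=k}^n p^{(n)}_{n-j}a^{(j)}_{j-k}=1$ for all $1\le k\le n$. The Caputo derivative of order $\alpha$ is ${}^C_0D^\alpha_t v(t)=\int_0^t\omega_{1-\alpha}(t-s)v'(s)\,ds$, and the local consistency error at $t_{n-1/2}$ is $$R^n={}^C_0D^\alpha_t v(t_{n-1/2})-\sum_{k=1}^n a^{(n)}_{n-k}\big(v(t_{k-1/2})-v(t_{k-3/2})\big),\qquad 1\le n\le N.$$ 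*)

theory Defs
  imports "HOL-Analysis.Analysis"
begin

definition omega :: "real \<Rightarrow> real \<Rightarrow> real" where
  "omega \<gamma> x = (if x > 0 then x powr (\<gamma> - 1) / Gamma \<gamma> else 0)"

definition tau :: "(nat \<Rightarrow> real) \<Rightarrow> nat \<Rightarrow> real" where
  "tau t n = t n - t (n - 1)"

text \<open>th t k = t_(k-1/2): th t 0 = t_(-1/2) = t_0, th t k = t_(k-1) + tau_k/2 for k >= 1.\<close>
definition th :: "(nat \<Rightarrow> real) \<Rightarrow> nat \<Rightarrow> real" where
  "th t k = (if k = 0 then t 0 else t (k - 1) + tau t k / 2)"

text \<open>tauh t k = tau_(k-1/2): tau_(1/2) = tau_1/2, tau_(k-1/2) = (tau_k + tau_(k-1))/2 for k >= 2.\<close>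
definition tauh :: "(nat \<Rightarrow> real) \<Rightarrow> nat \<Rightarrow> real" where
  "tauh t k = (if k \<le> 1 then tau t 1 / 2 else (tau t k + tau t (k - 1)) / 2)"

text \<open>acoef alpha t n k = a^(n)_(n-k)
  = 1/tau_(k-1/2) * integral over [t_(k-3/2), t_(k-1/2)] of omega_(1-alpha)(t_(n-1/2) - s).\<close>
definition acoef :: "real \<Rightarrow> (nat \<Rightarrow> real) \<Rightarrow> nat \<Rightarrow> nat \<Rightarrow> real" where
  "acoef \<alpha> t n k = (1 / tauh t k) *
      integral {th t (k - 1) .. th t k} (\<lambda>s. omega (1 - \<alpha>) (th t n - s))"

text \<open>DCC kernels: dcc alpha t n m = p^(n)_m (so p^(n)_(n-k) = dcc alpha t n (n-k)).
  p^(n)_0 = 1/a^(n)_0 and, for k = n - m with 1 <= k <= n-1,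
  p^(n)_(n-k) = 1/a^(k)_0 * sum_(j=k+1..n) (a^(j)_(j-k-1) - a^(j)_(j-k)) p^(n)_(n-j).\<close>
function dcc :: "real \<Rightarrow> (nat \<Rightarrow> real) \<Rightarrow> nat \<Rightarrow> nat \<Rightarrow> real" where
  "dcc \<alpha> t n m =
     (if m = 0 then 1 / acoef \<alpha> t n n
      else 1 / acoef \<alpha> t (n - m) (n - m) *
        (\<Sum>j\<in>{n - m + 1 .. n}.
           (acoef \<alpha> t j (n - m + 1) - acoef \<alpha> t j (n - m)) * dcc \<alpha> t n (n - j)))"
  by pat_completeness auto
termination
  by (relation "Wellfounded.measure (\<lambda>(\<alpha>, t, n, m). m)") auto

text \<open>Caputo derivative of order alpha at time x, for a function whose derivative is v1:
  integral over [0,x] of omega_(1-alpha)(x - s) v'(s).\<close>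
definition caputo :: "real \<Rightarrow> (real \<Rightarrow> real) \<Rightarrow> real \<Rightarrow> real" where
  "caputo \<alpha> v1 x = integral {0 .. x} (\<lambda>s. omega (1 - \<alpha>) (x - s) * v1 s)"

definition Rerr :: "real \<Rightarrow> (nat \<Rightarrow> real) \<Rightarrow> (real \<Rightarrow> real) \<Rightarrow> (real \<Rightarrow> real) \<Rightarrow> nat \<Rightarrow> real" where
  "Rerr \<alpha> t v v1 n = caputo \<alpha> v1 (th t n)
      - (\<Sum>k = 1..n. acoef \<alpha> t n k * (v (th t k) - v (th t (k - 1))))"

end

theory Submission
  imports Defs
begin


lemma powint:
  fixes y a b \<alpha> :: real
  assumes al: "0 < \<alpha>" "\<alpha> < 1" and ab: "a \<le> b" "b \<le> y"
  shows "((\<lambda>s. (y - s) powr (-\<alpha>)) has_integral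
           (((y-a) powr (1-\<alpha>) - (y-b) powr (1-\<alpha>))/(1-\<alpha>))) {a..b}"
proof -
  define F where "F = (\<lambda>s. - ((y - s) powr (1-\<alpha>)) / (1-\<alpha>))"
  have c: "continuous_on {a..b} F"
    unfolding F_def using ab al
    by (intro continuous_intros continuous_on_powr') auto
  have d: "(F has_vector_derivative (y - s) powr (-\<alpha>)) (at s)" if "s \<in> {a<..<b}" for s
  proof -
    have pos: "y - s > 0" using that ab by auto
    have h1: "((\<lambda>z. z powr (1-\<alpha>)) has_real_derivative (1-\<alpha>) * (y-s) powr (1-\<alpha>-1)) (at (y-s))"
      by (rule has_real_derivative_powr[OF pos])
    have h2: "((\<lambda>s. y - s) has_real_derivative -1) (at s)"
      by (auto intro!: derivative_eq_intros)
    have "((\<lambda>s. (y - s) powr (1-\<alpha>)) has_real_derivative (1-\<alpha>) * (y-s) powr (1-\<alpha>-1) * (-1)) (at s)"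
      using DERIV_chain2[where f="\<lambda>z. z powr (1-\<alpha>)" and g="\<lambda>s. y-s", OF h1 h2] by simp
    then have "(F has_real_derivative (y - s) powr (-\<alpha>)) (at s)"
      unfolding F_def using al pos
      by (auto intro!: derivative_eq_intros)
    then show ?thesis by (simp add: has_real_derivative_iff_has_vector_derivative)
  qed
  have "((\<lambda>s. (y - s) powr (-\<alpha>)) has_integral (F b - F a)) {a..b}"
    by (rule fundamental_theorem_of_calculus_interior[OF ab(1) c d])
  moreover have "F b - F a = ((y-a) powr (1-\<alpha>) - (y-b) powr (1-\<alpha>))/(1-\<alpha>)"
    unfolding F_def by (simp add: diff_divide_distrib)
  ultimately show ?thesis by simp
qed

lemma powint0:
  fixes b \<sigma> :: real
  assumes "0 < \<sigma>" "0 \<le> b"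
  shows "((\<lambda>s. s powr (\<sigma> - 1)) has_integral (b powr \<sigma> / \<sigma>)) {0..b}"
  using has_integral_powr_from_0[of "\<sigma>-1" b] assms by simp

lemma sum_swap_tri:
  fixes g :: "nat \<Rightarrow> nat \<Rightarrow> real"
  shows "(\<Sum>j=1..n. \<Sum>k=1..j. g j k) = (\<Sum>k=1..n. \<Sum>j=k..n. g j k)"
proof (induction n)
  case 0 then show ?case by simp
next
  case (Suc n)
  have "(\<Sum>k=1..Suc n. \<Sum>j=k..Suc n. g j k) = (\<Sum>k=1..n. \<Sum>j=k..Suc n. g j k) + g (Suc n) (Suc n)"
    by simp
  also have "(\<Sum>k=1..n. \<Sum>j=k..Suc n. g j k) = (\<Sum>k=1..n. (\<Sum>j=k..n. g j k) + g (Suc n) k)"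
    by (intro sum.cong) auto
  finally show ?case using Suc by (simp add: sum.distrib)
qed


locale cset =
  fixes \<alpha> :: real and N :: nat and t :: "nat \<Rightarrow> real" and v v1 v2 :: "real \<Rightarrow> real"
    and cv \<sigma> T :: real
  assumes al0: "0 < \<alpha>" and al1: "\<alpha> < 1" and N1: "N \<ge> 1" and t0: "t 0 = 0" and tN: "t N = T"
  and tinc: "\<And>n. 1 \<le> n \<Longrightarrow> n \<le> N \<Longrightarrow> t (n-1) < t n"
  and vc: "continuous_on {0..T} v"
  and vd: "\<And>s. s \<in> {0<..T} \<Longrightarrow> (v has_real_derivative v1 s) (at s within {0<..T})"
  and v1d: "\<And>s. s \<in> {0<..T} \<Longrightarrow> (v1 has_real_derivative v2 s) (at s within {0<..T})"
  and v2b: "\<And>s. s \<in> {0<..T} \<Longrightarrow> \<bar>v2 s\<bar> \<le> cv * (1 + s powr (\<sigma>-2))"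
  and cvp: "cv > 0" and sig: "(0 < \<sigma> \<and> \<sigma> < 1) \<or> (1 < \<sigma> \<and> \<sigma> < 2)" and T0: "T > 0"
begin

abbreviation "xx k \<equiv> th t k"
abbreviation "hh k \<equiv> tauh t k"
abbreviation "GG \<equiv> Gamma (1-\<alpha>)"
abbreviation "ff j s \<equiv> omega (1-\<alpha>) (xx j - s)"
abbreviation "AA j k \<equiv> acoef \<alpha> t j k"

lemma GGpos: "GG > 0" using al1 by (simp add: Gamma_real_pos)

lemma t_mono: "i \<le> j \<Longrightarrow> j \<le> N \<Longrightarrow> t i \<le> t j"
proof (induction j)
  case 0 then show ?case by simp
next
  case (Suc j) then show ?case using tinc[of "Suc j"] by (cases "i = Suc j") auto
qed

lemma t_strict: "i < j \<Longrightarrow> j \<le> N \<Longrightarrow> t i < t j"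
proof -
  assume a: "i < j" "j \<le> N"
  have "t i \<le> t (j-1)" by (rule t_mono) (use a in auto)
  moreover have "t (j-1) < t j" by (rule tinc) (use a in auto)
  ultimately show ?thesis by simp
qed

lemma t_rng: "k \<le> N \<Longrightarrow> 0 \<le> t k \<and> t k \<le> T"
  using t_mono[of 0 k] t_mono[of k N] t0 tN by auto

lemma x_eq: "1 \<le> k \<Longrightarrow> xx k = (t (k-1) + t k)/2"
  by (simp add: th_def tau_def field_simps)

lemma x0: "xx 0 = 0" by (simp add: th_def t0)

lemma x_strict: "i < j \<Longrightarrow> j \<le> N \<Longrightarrow> xx i < xx j"
proof (cases "i = 0")
  case True
  assume a: "i < j" "j \<le> N"
  have "0 \<le> t (j-1)" using t_rng[of "j-1"] a by auto
  then show ?thesis using a True x0 x_eq[of j] t_strict[of 0 j] t0 by auto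
next
  case False
  assume a: "i < j" "j \<le> N"
  have "t (i-1) \<le> t (j-1)" by (rule t_mono) (use a in auto)
  then show ?thesis using a False x_eq[of j] x_eq[of i] t_strict[of i j] by auto
qed

lemma x_mono: "i \<le> j \<Longrightarrow> j \<le> N \<Longrightarrow> xx i \<le> xx j"
  using x_strict[of i j] by (cases "i = j") auto

lemma x_rng: "k \<le> N \<Longrightarrow> 0 \<le> xx k \<and> xx k \<le> T"
proof (cases "k = 0")
  case True then show ?thesis using x0 T0 by simp
next
  case False
  assume "k \<le> N"
  have "0 \<le> t (k-1)" "t (k-1) \<le> t k" using t_rng[of "k-1"] t_mono[of "k-1" k] \<open>k \<le> N\<close> by auto
  then show ?thesis using False x_eq[of k] t_rng[of k] \<open>k \<le> N\<close> by auto
qed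

lemma x_pos: "1 \<le> k \<Longrightarrow> k \<le> N \<Longrightarrow> 0 < xx k"
  using x_strict[of 0 k] x0 by auto

lemma h_eq: "1 \<le> k \<Longrightarrow> k \<le> N \<Longrightarrow> hh k = xx k - xx (k-1)"
proof (cases "k = 1")
  case True then show ?thesis by (simp add: tauh_def th_def tau_def t0)
next
  case False
  assume "1 \<le> k" "k \<le> N"
  then have "k \<ge> 2" using False by auto
  then show ?thesis by (simp add: tauh_def th_def tau_def field_simps)
qed

lemma h_pos: "1 \<le> k \<Longrightarrow> k \<le> N \<Longrightarrow> 0 < hh k"
  using h_eq x_strict[of "k-1" k] by auto

lemma f_eq: "s \<le> xx j \<Longrightarrow> ff j s = (xx j - s) powr (-\<alpha>) / GG"
  by (auto simp: omega_def)

lemma f_int: "1 \<le> k \<Longrightarrow> k \<le> j \<Longrightarrow> j \<le> N \<Longrightarrow>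
  (ff j has_integral ((xx j - xx(k-1)) powr (1-\<alpha>) - (xx j - xx k) powr (1-\<alpha>))/(1-\<alpha>)/GG) {xx(k-1)..xx k}"
proof -
  assume a: "1 \<le> k" "k \<le> j" "j \<le> N"
  have le: "xx (k-1) \<le> xx k" "xx k \<le> xx j" using x_mono a by auto
  have "((\<lambda>s. (xx j - s) powr (-\<alpha>) / GG) has_integral ((xx j - xx(k-1)) powr (1-\<alpha>) - (xx j - xx k) powr (1-\<alpha>))/(1-\<alpha>)/GG) {xx(k-1)..xx k}"
    by (intro has_integral_divide powint al0 al1 le)
  then show ?thesis
    by (rule has_integral_cong[THEN iffD1, rotated]) (use le in \<open>auto simp: f_eq\<close>)
qed

lemma f_integrable: "1 \<le> k \<Longrightarrow> k \<le> j \<Longrightarrow> j \<le> N \<Longrightarrow> ff j integrable_on {xx(k-1)..xx k}"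
  using f_int by blast

lemma A_eq: "1 \<le> k \<Longrightarrow> k \<le> j \<Longrightarrow> j \<le> N \<Longrightarrow>
  AA j k = ((xx j - xx(k-1)) powr (1-\<alpha>) - (xx j - xx k) powr (1-\<alpha>))/((1-\<alpha>)*GG*hh k)"
  using f_int[THEN integral_unique] unfolding acoef_def by (simp add: field_simps)

lemma A_int: "1 \<le> k \<Longrightarrow> k \<le> j \<Longrightarrow> j \<le> N \<Longrightarrow> integral {xx(k-1)..xx k} (ff j) = hh k * AA j k"
  using h_pos[of k] unfolding acoef_def by auto

lemma A_pos: "1 \<le> k \<Longrightarrow> k \<le> j \<Longrightarrow> j \<le> N \<Longrightarrow> 0 < AA j k"
proof -
  assume a: "1 \<le> k" "k \<le> j" "j \<le> N"
  have "(xx j - xx k) powr (1-\<alpha>) < (xx j - xx(k-1)) powr (1-\<alpha>)"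
    using a x_mono[of k j] x_strict[of "k-1" k] al1 by (intro powr_less_mono2) auto
  then show ?thesis using A_eq[OF a] GGpos h_pos[of k] a al1 by auto
qed

lemma A_diag: "1 \<le> k \<Longrightarrow> k \<le> N \<Longrightarrow> AA k k = hh k powr (-\<alpha>) / ((1-\<alpha>)*GG)"
proof -
  assume a: "1 \<le> k" "k \<le> N"
  have hp: "hh k > 0" using h_pos a by auto
  have "hh k powr (1-\<alpha>) = hh k * hh k powr (-\<alpha>)"
    using hp powr_add[of "hh k" 1 "-\<alpha>"] by simp
  moreover have "xx k - xx(k-1) = hh k" using h_eq a by simp
  ultimately have "AA k k = hh k * hh k powr (-\<alpha>)/((1-\<alpha>)*GG*hh k)" using A_eq[of k k] a by simp
  then show ?thesis using hp by simp
qed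

lemma f_mono: "s \<le> r \<Longrightarrow> r < xx j \<Longrightarrow> ff j s \<le> ff j r"
  using al0 by (auto simp: f_eq intro!: divide_right_mono powr_mono2' GGpos[THEN less_imp_le])

lemma A_upper: "1 \<le> k \<Longrightarrow> k < j \<Longrightarrow> j \<le> N \<Longrightarrow> AA j k \<le> ff j (xx k)"
proof -
  assume a: "1 \<le> k" "k < j" "j \<le> N"
  have lt: "xx k < xx j" using x_strict a by auto
  have "integral {xx(k-1)..xx k} (ff j) \<le> integral {xx(k-1)..xx k} (\<lambda>s. ff j (xx k))"
    using a lt by (intro integral_le f_integrable) (auto intro!: f_mono)
  also have "\<dots> = hh k * ff j (xx k)" using h_eq[of k] a x_strict[of "k-1" k] by simp
  finally show ?thesis using h_pos[of k] a unfolding acoef_def by (simp add: field_simps)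
qed

lemma A_lower: "1 \<le> k \<Longrightarrow> k < j \<Longrightarrow> j \<le> N \<Longrightarrow> ff j (xx k) \<le> AA j (k+1)"
proof -
  assume a: "1 \<le> k" "k < j" "j \<le> N"
  let ?c = "ff j (xx k)"
  define g where "g s = (if s = xx j then ?c else ff j s)" for s
  have fi: "ff j integrable_on {xx k..xx (k+1)}" using f_integrable[of "k+1" j] a by simp
  have ieq: "integral {xx k..xx (k+1)} (ff j) = integral {xx k..xx (k+1)} g"
    by (rule integral_spike[of "{xx j}"]) (auto simp: g_def)
  have gi: "g integrable_on {xx k..xx (k+1)}"
    using fi by (rule integrable_spike[where S="{xx j}"]) (auto simp: g_def)
  have le1: "xx (k+1) \<le> xx j" using x_mono a by auto
  have "integral {xx k..xx (k+1)} (\<lambda>s. ?c) \<le> integral {xx k..xx (k+1)} g"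
    using gi le1 by (intro integral_le) (auto simp: g_def intro!: f_mono)
  moreover have "integral {xx k..xx (k+1)} (\<lambda>s. ?c) = hh (k+1) * ?c"
  proof -
    have "xx k \<le> xx (k+1)" "hh (k+1) = xx (k+1) - xx k" using h_eq[of "k+1"] a x_strict[of k "k+1"] by auto
    then show ?thesis by simp
  qed
  ultimately have "hh (k+1) * ?c \<le> integral {xx k..xx (k+1)} (ff j)" using ieq by linarith
  then show ?thesis using h_pos[of "k+1"] a unfolding acoef_def by (simp add: field_simps)
qed


lemma A_step: "1 \<le> k \<Longrightarrow> k < j \<Longrightarrow> j \<le> N \<Longrightarrow> AA j k \<le> AA j (k+1)"
  using A_upper A_lower by (meson order_trans)

lemma dcc_nonneg: "n \<le> N \<Longrightarrow> m < n \<Longrightarrow> 0 \<le> dcc \<alpha> t n m"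
proof (induction m rule: less_induct)
  case (less m)
  show ?case
  proof (cases "m = 0")
    case True
    then show ?thesis using A_pos[of n n] less.prems by (subst dcc.simps) auto
  next
    case False
    have "0 \<le> (\<Sum>j\<in>{n - m + 1 .. n}. (AA j (n - m + 1) - AA j (n - m)) * dcc \<alpha> t n (n - j))"
    proof (intro sum_nonneg mult_nonneg_nonneg)
      fix j assume j: "j \<in> {n - m + 1 .. n}"
      show "0 \<le> AA j (n - m + 1) - AA j (n - m)"
        using A_step[of "n-m" j] j less.prems False by auto
      show "0 \<le> dcc \<alpha> t n (n - j)"
        using less.IH[of "n-j"] j less.prems False by auto
    qed
    moreover have "0 < AA (n-m) (n-m)" using A_pos less.prems False by auto
    ultimately show ?thesis using False by (subst dcc.simps) auto
  qed
qed

lemma dcc_rec: "n \<le> N \<Longrightarrow> 1 \<le> k \<Longrightarrow> k < n \<Longrightarrow>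
   dcc \<alpha> t n (n-k) * AA k k = (\<Sum>j=k+1..n. (AA j (k+1) - AA j k) * dcc \<alpha> t n (n-j))"
proof -
  assume a: "n \<le> N" "1 \<le> k" "k < n"
  have p: "0 < AA k k" using A_pos a by auto
  have e: "n - (n - k) = k" using a by auto
  have "dcc \<alpha> t n (n-k) = 1 / AA k k * (\<Sum>j=k+1..n. (AA j (k+1) - AA j k) * dcc \<alpha> t n (n-j))"
    using a by (subst dcc.simps) (simp add: e)
  then show ?thesis using p by simp
qed

lemma dcc_sum: "n \<le> N \<Longrightarrow> 1 \<le> k \<Longrightarrow> k \<le> n \<Longrightarrow> (\<Sum>j=k..n. dcc \<alpha> t n (n-j) * AA j k) = 1"
proof -
  assume nN: "n \<le> N"
  have "\<forall>k. n - k = d \<longrightarrow> 1 \<le> k \<longrightarrow> k \<le> n \<longrightarrow> (\<Sum>j=k..n. dcc \<alpha> t n (n-j) * AA j k) = 1" for d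
  proof (induction d)
    case 0
    show ?case
    proof (intro allI impI)
      fix k assume k: "n - k = 0" "1 \<le> k" "k \<le> n"
      then have "k = n" by auto
      then show "(\<Sum>j=k..n. dcc \<alpha> t n (n-j) * AA j k) = 1"
        using A_pos[of n n] k nN by (subst dcc.simps) auto
    qed
  next
    case (Suc d)
    show ?case
    proof (intro allI impI)
      fix k assume k: "n - k = Suc d" "1 \<le> k" "k \<le> n"
      then have kn: "k < n" by auto
      have "(\<Sum>j=k..n. dcc \<alpha> t n (n-j) * AA j k) = dcc \<alpha> t n (n-k) * AA k k + (\<Sum>j=k+1..n. dcc \<alpha> t n (n-j) * AA j k)"
        using kn by (simp add: sum.atLeast_Suc_atMost)
      also have "\<dots> = (\<Sum>j=k+1..n. (AA j (k+1) - AA j k) * dcc \<alpha> t n (n-j)) + (\<Sum>j=k+1..n. dcc \<alpha> t n (n-j) * AA j k)"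
        using dcc_rec[OF nN k(2) kn] by simp
      also have "\<dots> = (\<Sum>j=k+1..n. dcc \<alpha> t n (n-j) * AA j (k+1))"
        by (simp add: sum.distrib[symmetric] algebra_simps)
      also have "\<dots> = 1" using Suc.IH k kn by auto
      finally show "(\<Sum>j=k..n. dcc \<alpha> t n (n-j) * AA j k) = 1" .
    qed
  qed
  then show "1 \<le> k \<Longrightarrow> k \<le> n \<Longrightarrow> (\<Sum>j=k..n. dcc \<alpha> t n (n-j) * AA j k) = 1" by blast
qed


lemma v1_cont: "continuous_on {0<..T} v1"
  using v1d by (rule DERIV_continuous_on)

lemma v_at: "0 < s \<Longrightarrow> s < T \<Longrightarrow> (v has_real_derivative v1 s) (at s)"
proof -
  assume a: "0 < s" "s < T"
  have "at s within {0<..T} = at s" by (rule at_within_open_subset[of s "{0<..<T}"]) (use a in auto)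
  then show ?thesis using vd[of s] a by auto
qed

lemma v1_at: "0 < s \<Longrightarrow> s < T \<Longrightarrow> (v1 has_real_derivative v2 s) (at s)"
proof -
  assume a: "0 < s" "s < T"
  have "at s within {0<..T} = at s" by (rule at_within_open_subset[of s "{0<..<T}"]) (use a in auto)
  then show ?thesis using v1d[of s] a by auto
qed

lemma v1_lip: "0 < a \<Longrightarrow> a \<le> r \<Longrightarrow> r \<le> s \<Longrightarrow> s \<le> T \<Longrightarrow>
    \<bar>v1 s - v1 r\<bar> \<le> cv * (1 + a powr (\<sigma>-2)) * (s - r)"
proof -
  assume a: "0 < a" "a \<le> r" "r \<le> s" "s \<le> T"
  define M where "M = cv * (1 + a powr (\<sigma>-2))"
  have cont: "continuous_on {r..s} v1" using v1_cont by (rule continuous_on_subset) (use a in auto)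
  have vb: "\<bar>v2 y\<bar> \<le> M" if "r < y" "y < s" for y
  proof -
    have "\<bar>v2 y\<bar> \<le> cv * (1 + y powr (\<sigma>-2))" using v2b[of y] that a by auto
    also have "\<dots> \<le> M" unfolding M_def using cvp a that sig
      by (intro mult_left_mono add_left_mono powr_mono2') auto
    finally show ?thesis .
  qed
  have "M * r - v1 r \<le> M * s - v1 s"
  proof (rule DERIV_nonneg_imp_increasing_open[OF a(3)])
    fix y assume y: "r < y" "y < s"
    have "((\<lambda>y. M * y - v1 y) has_real_derivative M - v2 y) (at y)"
      using v1_at[of y] y a by (auto intro!: derivative_eq_intros)
    then show "\<exists>d. ((\<lambda>y. M * y - v1 y) has_real_derivative d) (at y) \<and> 0 \<le> d"
      using vb[OF y] by auto
  qed (intro continuous_intros cont)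
  moreover have "M * r + v1 r \<le> M * s + v1 s"
  proof (rule DERIV_nonneg_imp_increasing_open[OF a(3)])
    fix y assume y: "r < y" "y < s"
    have "((\<lambda>y. M * y + v1 y) has_real_derivative M + v2 y) (at y)"
      using v1_at[of y] y a by (auto intro!: derivative_eq_intros)
    then show "\<exists>d. ((\<lambda>y. M * y + v1 y) has_real_derivative d) (at y) \<and> 0 \<le> d"
      using vb[OF y] by auto
  qed (intro continuous_intros cont)
  ultimately show ?thesis unfolding M_def[symmetric] by (simp add: abs_le_iff algebra_simps)
qed

abbreviation "LL \<equiv> 1 / \<bar>\<sigma> - 1\<bar>"

lemma v1_sing: "0 < s \<Longrightarrow> s \<le> c \<Longrightarrow> c \<le> T \<Longrightarrow>
    \<bar>v1 s - v1 c\<bar> \<le> cv * (c + LL * s powr (\<sigma>-1) + LL * c powr (\<sigma>-1))"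
proof -
  assume a: "0 < s" "s \<le> c" "c \<le> T"
  have s1: "\<sigma> - 1 \<noteq> 0" using sig by auto
  define E where "E y = cv * (y + y powr (\<sigma>-1) / (\<sigma>-1))" for y
  have cont: "continuous_on {s..c} v1" using v1_cont by (rule continuous_on_subset) (use a in auto)
  have contE: "continuous_on {s..c} E" unfolding E_def using a s1
    by (intro continuous_intros continuous_on_powr') auto
  have dE: "(E has_real_derivative cv * (1 + y powr (\<sigma>-2))) (at y)" if "0 < y" for y
  proof -
    have "((\<lambda>y. y powr (\<sigma>-1)) has_real_derivative (\<sigma>-1) * y powr (\<sigma>-1-1)) (at y)"
      by (rule has_real_derivative_powr[OF that])
    then have "(E has_real_derivative cv * (1 + (\<sigma>-1) * y powr (\<sigma>-1-1) / (\<sigma>-1))) (at y)"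
      unfolding E_def using that by (auto intro!: derivative_eq_intros)
    then show ?thesis using s1 by simp
  qed
  have vb: "\<bar>v2 y\<bar> \<le> cv * (1 + y powr (\<sigma>-2))" if "s < y" "y < c" for y
    using v2b[of y] that a by auto
  have "E s - v1 s \<le> E c - v1 c"
  proof (rule DERIV_nonneg_imp_increasing_open[OF a(2)])
    fix y assume y: "s < y" "y < c"
    have "((\<lambda>y. E y - v1 y) has_real_derivative cv * (1 + y powr (\<sigma>-2)) - v2 y) (at y)"
      using v1_at[of y] dE[of y] y a by (auto intro!: derivative_eq_intros)
    then show "\<exists>d. ((\<lambda>y. E y - v1 y) has_real_derivative d) (at y) \<and> 0 \<le> d"
      using vb[OF y] by auto
  qed (intro continuous_intros cont contE)
  moreover have "E s + v1 s \<le> E c + v1 c"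
  proof (rule DERIV_nonneg_imp_increasing_open[OF a(2)])
    fix y assume y: "s < y" "y < c"
    have "((\<lambda>y. E y + v1 y) has_real_derivative cv * (1 + y powr (\<sigma>-2)) + v2 y) (at y)"
      using v1_at[of y] dE[of y] y a by (auto intro!: derivative_eq_intros)
    then show "\<exists>d. ((\<lambda>y. E y + v1 y) has_real_derivative d) (at y) \<and> 0 \<le> d"
      using vb[OF y] by auto
  qed (intro continuous_intros cont contE)
  ultimately have 1: "\<bar>v1 s - v1 c\<bar> \<le> E c - E s" by (simp add: abs_le_iff algebra_simps)
  have 2: "E c - E s = cv * (c - s) + cv * ((c powr (\<sigma>-1) - s powr (\<sigma>-1)) / (\<sigma>-1))"
    unfolding E_def by (simp add: algebra_simps diff_divide_distrib)
  have 3: "(c powr (\<sigma>-1) - s powr (\<sigma>-1)) / (\<sigma>-1) \<le> LL * s powr (\<sigma>-1) + LL * c powr (\<sigma>-1)"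
  proof -
    have "(c powr (\<sigma>-1) - s powr (\<sigma>-1)) / (\<sigma>-1) \<le> \<bar>c powr (\<sigma>-1) - s powr (\<sigma>-1)\<bar> / \<bar>\<sigma>-1\<bar>"
      by (metis abs_divide abs_ge_self)
    also have "\<dots> \<le> (s powr (\<sigma>-1) + c powr (\<sigma>-1)) / \<bar>\<sigma>-1\<bar>"
      by (intro divide_right_mono) (use powr_ge_zero[of c "\<sigma>-1"] powr_ge_zero[of s "\<sigma>-1"] in \<open>auto simp: abs_le_iff\<close>)
    finally show ?thesis by (simp add: add_divide_distrib)
  qed
  have "cv * (c - s) \<le> cv * c" using cvp a by auto
  then show ?thesis using 1 2 3 cvp
    by (smt (verit, ccfv_SIG) distrib_left mult_left_mono)
qed

abbreviation "bb \<equiv> xx 1"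
definition "w s = (if s = 0 then v1 bb else v1 s)"

lemma w_pos: "0 < s \<Longrightarrow> w s = v1 s" by (simp add: w_def)

lemma w_int: "1 \<le> k \<Longrightarrow> k \<le> N \<Longrightarrow> (w has_integral (v (xx k) - v (xx (k-1)))) {xx(k-1)..xx k}"
proof -
  assume a: "1 \<le> k" "k \<le> N"
  have le: "xx (k-1) \<le> xx k" using x_mono a by auto
  have r: "0 \<le> xx (k-1)" "xx k \<le> T" using x_rng a by auto
  show ?thesis
  proof (rule fundamental_theorem_of_calculus_interior[OF le])
    show "continuous_on {xx (k-1)..xx k} v" using vc by (rule continuous_on_subset) (use r in auto)
    fix y assume "y \<in> {xx (k-1)<..<xx k}"
    then have y: "0 < y" "y < T" using r by auto
    then show "(v has_vector_derivative w y) (at y)"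
      using v_at[OF y] w_pos[OF y(1)] by (simp add: has_real_derivative_iff_has_vector_derivative)
  qed
qed

end



context cset begin

definition "dl k = (v (xx k) - v (xx (k-1))) / hh k"
definition "Icell j k = integral {xx(k-1)..xx k} (\<lambda>s. ff j s * (w s - dl k))"

lemma b_pos: "0 < bb" using x_pos[of 1] N1 by auto
lemma b_le: "bb \<le> T" using x_rng[of 1] N1 by auto
lemma h1: "hh 1 = bb" using h_eq[of 1] N1 x0 by auto

lemma w_integrable: "1 \<le> k \<Longrightarrow> k \<le> N \<Longrightarrow> w integrable_on {xx(k-1)..xx k}"
  using w_int by blast

lemma dl_int: "1 \<le> k \<Longrightarrow> k \<le> N \<Longrightarrow> integral {xx(k-1)..xx k} w = hh k * dl k"
  using w_int[THEN integral_unique] h_pos[of k] unfolding dl_def by auto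

lemma cell_len: "1 \<le> k \<Longrightarrow> k \<le> N \<Longrightarrow> integral {xx(k-1)..xx k} (\<lambda>s. c) = hh k * c"
  using h_eq[of k] x_mono[of "k-1" k] by simp

lemma phi_int0: "1 \<le> k \<Longrightarrow> k \<le> N \<Longrightarrow> integral {xx(k-1)..xx k} (\<lambda>s. w s - dl k) = 0"
proof -
  assume a: "1 \<le> k" "k \<le> N"
  have "integral {xx(k-1)..xx k} (\<lambda>s. w s - dl k) = integral {xx(k-1)..xx k} w - integral {xx(k-1)..xx k} (\<lambda>s. dl k)"
    by (rule integral_diff) (use w_integrable a in auto)
  also have "\<dots> = 0" using dl_int[OF a] cell_len[OF a, of "dl k"] by linarith
  finally show ?thesis .
qed

lemma phi_bound: "2 \<le> k \<Longrightarrow> k \<le> N \<Longrightarrow> s \<in> {xx(k-1)..xx k} \<Longrightarrow>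
   \<bar>w s - dl k\<bar> \<le> hh k * (cv * (1 + xx (k-1) powr (\<sigma>-2)))"
proof -
  assume a: "2 \<le> k" "k \<le> N" and s: "s \<in> {xx(k-1)..xx k}"
  define S where "S = cv * (1 + xx (k-1) powr (\<sigma>-2))"
  have ap: "0 < xx (k-1)" using x_pos[of "k-1"] a by auto
  have xT: "xx k \<le> T" using x_rng a by auto
  have hk: "hh k = xx k - xx (k-1)" "0 < hh k" using h_eq h_pos a by auto
  have lip: "\<bar>w s - w r\<bar> \<le> S * hh k" if r: "r \<in> {xx(k-1)..xx k}" for r
  proof -
    have "\<bar>w s - w r\<bar> \<le> S * \<bar>s - r\<bar>"
    proof (cases "r \<le> s")
      case True
      then show ?thesis using v1_lip[of "xx(k-1)" r s] ap r s xT w_pos[of s] w_pos[of r]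
        unfolding S_def by auto
    next
      case False
      then show ?thesis using v1_lip[of "xx(k-1)" s r] ap r s xT w_pos[of s] w_pos[of r]
        unfolding S_def by (auto simp: abs_minus_commute)
    qed
    also have "\<dots> \<le> S * hh k" using r s hk cvp unfolding S_def
      by (intro mult_left_mono) (auto simp: abs_le_iff)
    finally show ?thesis .
  qed
  have wi: "w integrable_on {xx(k-1)..xx k}" using w_integrable a by auto
  have "integral {xx(k-1)..xx k} (\<lambda>r. w s - w r) = integral {xx(k-1)..xx k} (\<lambda>r. w s) - integral {xx(k-1)..xx k} w"
    by (rule integral_diff) (use wi in auto)
  also have "\<dots> = hh k * w s - hh k * dl k" using dl_int[of k] cell_len[of k "w s"] a by auto
  finally have "integral {xx(k-1)..xx k} (\<lambda>r. w s - w r) = hh k * w s - hh k * dl k" .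
  moreover have "\<bar>integral {xx(k-1)..xx k} (\<lambda>r. w s - w r)\<bar> \<le> integral {xx(k-1)..xx k} (\<lambda>r. S * hh k)"
    using lip by (intro integral_norm_bound_integral[where f="\<lambda>r. w s - w r", simplified]
        integrable_diff integrable_const_ivl wi) auto
  moreover have "integral {xx(k-1)..xx k} (\<lambda>r. S * hh k) = hh k * (S * hh k)" using cell_len a by auto
  ultimately have "\<bar>hh k * (w s - dl k)\<bar> \<le> hh k * (S * hh k)"
    by (metis right_diff_distrib)
  then have "hh k * \<bar>w s - dl k\<bar> \<le> hh k * (S * hh k)"
    using hk(2) by (simp add: abs_mult)
  then have "\<bar>w s - dl k\<bar> \<le> S * hh k" using hk(2) by (rule mult_left_le_imp_le)
  then show ?thesis unfolding S_def by (simp add: mult.commute)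
qed


lemma sig_pos: "0 < \<sigma>" using sig by auto
lemma sig_lt2: "\<sigma> < 2" using sig by auto

abbreviation "KK0 \<equiv> cv * (2 * T powr (2-\<sigma>) + LL * (2 + 1/\<sigma>))"

lemma bb_split: "bb = bb powr (2-\<sigma>) * bb powr (\<sigma>-1)"
  using powr_add[of bb "2-\<sigma>" "\<sigma>-1"] b_pos by simp

lemma bb_le: "bb \<le> T powr (2-\<sigma>) * bb powr (\<sigma>-1)"
proof -
  have "bb powr (2-\<sigma>) \<le> T powr (2-\<sigma>)" using b_pos b_le sig_lt2 by (intro powr_mono2) auto
  then show ?thesis using bb_split by (metis mult_right_mono powr_ge_zero)
qed

lemma bb_sig: "bb powr \<sigma> = bb * bb powr (\<sigma>-1)"
  using powr_add[of bb 1 "\<sigma>-1"] b_pos by simp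

lemma psi_bound: "s \<in> {0..bb} \<Longrightarrow> \<bar>w s - dl 1\<bar> \<le> KK0 * bb powr (\<sigma>-1) + cv * LL * s powr (\<sigma>-1)"
proof -
  assume s: "s \<in> {0..bb}"
  define C1 where "C1 = cv * (bb + LL * bb powr (\<sigma>-1))"
  define C2 where "C2 = cv * LL"
  have C1p: "0 \<le> C1" unfolding C1_def using cvp b_pos by auto
  have C2p: "0 \<le> C2" unfolding C2_def using cvp by auto
  have wb: "\<bar>w r - v1 bb\<bar> \<le> C1 + C2 * r powr (\<sigma>-1)" if r: "r \<in> {0..bb}" for r
  proof (cases "r = 0")
    case True
    then show ?thesis using C1p C2p by (simp add: w_def)
  next
    case False
    then have "\<bar>v1 r - v1 bb\<bar> \<le> cv * (bb + LL * r powr (\<sigma>-1) + LL * bb powr (\<sigma>-1))"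
      using r b_le by (intro v1_sing) auto
    then show ?thesis using False r unfolding C1_def C2_def by (simp add: w_def algebra_simps)
  qed
  have gi: "((\<lambda>r. C1 + C2 * r powr (\<sigma>-1)) has_integral (bb * C1 + C2 * (bb powr \<sigma> / \<sigma>))) {0..bb}"
  proof (rule has_integral_add)
    show "((\<lambda>r. C1) has_integral bb * C1) {0..bb}" using has_integral_const_real[of C1 0 bb] b_pos by simp
    show "((\<lambda>r. C2 * r powr (\<sigma>-1)) has_integral C2 * (bb powr \<sigma> / \<sigma>)) {0..bb}"
      by (intro has_integral_mult_right powint0 sig_pos) (use b_pos in auto)
  qed
  have wi: "w integrable_on {0..bb}" using w_integrable[of 1] N1 x0 by simp
  have "integral {0..bb} (\<lambda>r. w r - v1 bb) = integral {0..bb} w - integral {0..bb} (\<lambda>r. v1 bb)"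
    by (rule integral_diff) (use wi in auto)
  also have "\<dots> = bb * dl 1 - bb * v1 bb" using dl_int[of 1] N1 x0 h1 b_pos by simp
  finally have ie: "integral {0..bb} (\<lambda>r. w r - v1 bb) = bb * (dl 1 - v1 bb)" by (simp add: algebra_simps)
  have fi: "(\<lambda>r. w r - v1 bb) integrable_on {0..bb}" by (intro integrable_diff integrable_const_ivl wi)
  have "norm (integral {0..bb} (\<lambda>r. w r - v1 bb)) \<le> integral {0..bb} (\<lambda>r. C1 + C2 * r powr (\<sigma>-1))"
    using integral_norm_bound_integral[OF fi gi[THEN has_integral_integrable]] wb by auto
  then have "\<bar>integral {0..bb} (\<lambda>r. w r - v1 bb)\<bar> \<le> integral {0..bb} (\<lambda>r. C1 + C2 * r powr (\<sigma>-1))"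
    by simp
  then have "bb * \<bar>dl 1 - v1 bb\<bar> \<le> bb * C1 + C2 * (bb powr \<sigma> / \<sigma>)"
    using ie gi[THEN integral_unique] b_pos by (simp add: abs_mult)
  also have "\<dots> = bb * (C1 + C2 * bb powr (\<sigma>-1) / \<sigma>)" using bb_sig by (simp add: algebra_simps)
  finally have d1: "\<bar>dl 1 - v1 bb\<bar> \<le> C1 + C2 * bb powr (\<sigma>-1) / \<sigma>"
    using b_pos by (rule mult_left_le_imp_le)
  have "\<bar>w s - dl 1\<bar> \<le> \<bar>w s - v1 bb\<bar> + \<bar>dl 1 - v1 bb\<bar>" by linarith
  also have "\<dots> \<le> (C1 + C2 * s powr (\<sigma>-1)) + (C1 + C2 * bb powr (\<sigma>-1) / \<sigma>)"
    using wb[OF s] d1 by linarith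
  also have "\<dots> = cv * (2 * bb + LL * (2 + 1/\<sigma>) * bb powr (\<sigma>-1)) + cv * LL * s powr (\<sigma>-1)"
    unfolding C1_def C2_def by (simp add: algebra_simps)
  also have "\<dots> \<le> KK0 * bb powr (\<sigma>-1) + cv * LL * s powr (\<sigma>-1)"
  proof -
    have "2 * bb + LL * (2 + 1/\<sigma>) * bb powr (\<sigma>-1) \<le> (2 * T powr (2-\<sigma>) + LL * (2 + 1/\<sigma>)) * bb powr (\<sigma>-1)"
      using bb_le by (simp add: algebra_simps)
    then show ?thesis using cvp by (simp add: mult.assoc mult_left_mono)
  qed
  finally show ?thesis .
qed

lemma dom_lemma:
  assumes k: "1 \<le> k" "k \<le> j" "j \<le> N"
    and g: "(g has_integral I) {xx(k-1)..xx k}"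
    and le: "\<And>s. s \<in> {xx(k-1)..xx k} \<Longrightarrow> \<bar>ff j s * (w s - dl k)\<bar> \<le> g s"
  shows "(\<lambda>s. ff j s * (w s - dl k)) integrable_on {xx(k-1)..xx k}" "\<bar>Icell j k\<bar> \<le> I"
proof -
  let ?S = "{xx(k-1)..xx k}"
  have m1: "ff j \<in> borel_measurable (lebesgue_on ?S)"
    using f_integrable[OF k] by (rule integrable_imp_measurable)
  have wi: "(\<lambda>s. w s - dl k) integrable_on ?S"
    using w_integrable[of k] k by (intro integrable_diff integrable_const_ivl) auto
  have m2: "(\<lambda>s. w s - dl k) \<in> borel_measurable (lebesgue_on ?S)"
    using wi by (rule integrable_imp_measurable)
  have "(\<lambda>s. ff j s * (w s - dl k)) absolutely_integrable_on ?S"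
    using le g by (intro measurable_bounded_by_integrable_imp_absolutely_integrable[where g=g] borel_measurable_times m1 m2) auto
  then show i: "(\<lambda>s. ff j s * (w s - dl k)) integrable_on ?S"
    using absolutely_integrable_on_def by blast
  have "\<bar>Icell j k\<bar> \<le> integral ?S g" unfolding Icell_def
    using integral_norm_bound_integral[OF i g[THEN has_integral_integrable]] le by auto
  then show "\<bar>Icell j k\<bar> \<le> I" using g[THEN integral_unique] by simp
qed

end



context cset begin

abbreviation "SS k \<equiv> cv * (1 + xx (k-1) powr (\<sigma>-2))"

lemma f_nonneg: "0 \<le> ff j s"
  using GGpos by (auto simp: omega_def)

lemma f_hasint: "1 \<le> k \<Longrightarrow> k \<le> j \<Longrightarrow> j \<le> N \<Longrightarrow> (ff j has_integral hh k * AA j k) {xx(k-1)..xx k}"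
  using integrable_integral[OF f_integrable[of k j]] A_int[of k j] by metis

lemma SS_nonneg: "0 \<le> SS k" using cvp by (simp add: add_nonneg_nonneg)

lemma cell_k_int: "2 \<le> k \<Longrightarrow> k \<le> j \<Longrightarrow> j \<le> N \<Longrightarrow>
   (\<lambda>s. ff j s * (w s - dl k)) integrable_on {xx(k-1)..xx k} \<and>
   \<bar>Icell j k\<bar> \<le> hh k * AA j k * (hh k * SS k)"
proof -
  assume a: "2 \<le> k" "k \<le> j" "j \<le> N"
  have g: "((\<lambda>s. ff j s * (hh k * SS k)) has_integral (hh k * AA j k * (hh k * SS k))) {xx(k-1)..xx k}"
    using f_hasint[of k j] a by (intro has_integral_mult_left) auto
  have le: "\<bar>ff j s * (w s - dl k)\<bar> \<le> ff j s * (hh k * SS k)" if "s \<in> {xx(k-1)..xx k}" for s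
    using phi_bound[of k s] that a f_nonneg[of j s] by (auto simp: abs_mult intro: mult_left_mono)
  show ?thesis using dom_lemma[OF _ _ _ g le] a by auto
qed

lemma cell_k_lt: "2 \<le> k \<Longrightarrow> k < j \<Longrightarrow> j \<le> N \<Longrightarrow>
   \<bar>Icell j k\<bar> \<le> hh k * hh k * SS k * (AA j (k+1) - AA j k)"
proof -
  assume a: "2 \<le> k" "k < j" "j \<le> N"
  let ?S = "{xx(k-1)..xx k}"
  let ?c = "ff j (xx k)"
  have fi: "(\<lambda>s. ff j s * (w s - dl k)) integrable_on ?S" using cell_k_int[of k j] a by auto
  have wi: "(\<lambda>s. w s - dl k) integrable_on ?S"
    using w_integrable[of k] a by (intro integrable_diff integrable_const_ivl) auto
  have ci: "(\<lambda>s. ?c * (w s - dl k)) integrable_on ?S"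
    using has_integral_mult_right[OF integrable_integral[OF wi], of ?c] by (auto simp: integrable_on_def)
  have "integral ?S (\<lambda>s. (ff j s - ?c) * (w s - dl k)) = integral ?S (\<lambda>s. ff j s * (w s - dl k) - ?c * (w s - dl k))"
    by (simp add: algebra_simps)
  also have "\<dots> = Icell j k - integral ?S (\<lambda>s. ?c * (w s - dl k))"
    unfolding Icell_def by (rule integral_diff[OF fi ci])
  also have "integral ?S (\<lambda>s. ?c * (w s - dl k)) = ?c * integral ?S (\<lambda>s. w s - dl k)"
    by (rule integral_mult_right)
  also have "\<dots> = 0" using phi_int0[of k] a by simp
  finally have e: "Icell j k = integral ?S (\<lambda>s. (ff j s - ?c) * (w s - dl k))" by simp
  have di: "(\<lambda>s. (ff j s - ?c) * (w s - dl k)) integrable_on ?S"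
    using integrable_diff[OF fi ci] by (simp add: algebra_simps)
  have gint: "((\<lambda>s. (?c - ff j s) * (hh k * SS k)) has_integral ((?c * hh k - hh k * AA j k) * (hh k * SS k))) ?S"
  proof (intro has_integral_mult_left has_integral_diff)
    show "((\<lambda>s. ?c) has_integral ?c * hh k) ?S" using has_integral_const_real[of ?c "xx(k-1)" "xx k"]
      h_eq[of k] x_mono[of "k-1" k] a by (simp add: mult.commute)
    show "(ff j has_integral hh k * AA j k) ?S"
      using f_hasint[of k j] a by auto
  qed
  have le: "norm ((ff j s - ?c) * (w s - dl k)) \<le> (?c - ff j s) * (hh k * SS k)" if s: "s \<in> ?S" for s
  proof -
    have "ff j s \<le> ?c" using s x_strict[of k j] a by (intro f_mono) auto
    then show ?thesis using phi_bound[of k s] s a by (auto simp: abs_mult intro: mult_left_mono)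
  qed
  have "\<bar>Icell j k\<bar> \<le> (?c * hh k - hh k * AA j k) * (hh k * SS k)"
    using integral_norm_bound_integral[OF di gint[THEN has_integral_integrable]] le gint[THEN integral_unique] e
    by auto
  also have "\<dots> = hh k * hh k * SS k * (?c - AA j k)" by (simp add: algebra_simps)
  also have "\<dots> \<le> hh k * hh k * SS k * (AA j (k+1) - AA j k)"
    using A_lower[of k j] a SS_nonneg[of k] by (intro mult_left_mono) auto
  finally show ?thesis .
qed


abbreviation "KK1 \<equiv> KK0 + cv * LL / \<sigma>"
abbreviation "KK2 \<equiv> KK0 + 2 * cv * LL + 2 * cv * LL / \<sigma>"

lemma KK0_nonneg: "0 \<le> KK0"
  using cvp sig_pos by (intro mult_nonneg_nonneg add_nonneg_nonneg) auto

lemma cell1: "{xx(1-1)..xx 1} = {0..bb}" using x0 by simp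

lemma cell_1_j: "2 \<le> j \<Longrightarrow> j \<le> N \<Longrightarrow>
   (\<lambda>s. ff j s * (w s - dl 1)) integrable_on {xx(1-1)..xx 1} \<and> \<bar>Icell j 1\<bar> \<le> ff j bb * (KK1 * bb powr \<sigma>)"
proof -
  assume a: "2 \<le> j" "j \<le> N"
  let ?g = "\<lambda>s. ff j bb * (KK0 * bb powr (\<sigma>-1) + cv * LL * s powr (\<sigma>-1))"
  have g0: "(?g has_integral (ff j bb * (bb * (KK0 * bb powr (\<sigma>-1)) + cv * LL * (bb powr \<sigma> / \<sigma>)))) {0..bb}"
  proof (rule has_integral_mult_right, rule has_integral_add)
    show "((\<lambda>s. KK0 * bb powr (\<sigma>-1)) has_integral bb * (KK0 * bb powr (\<sigma>-1))) {0..bb}"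
      using has_integral_const_real[of "KK0 * bb powr (\<sigma>-1)" 0 bb] b_pos by simp
    show "((\<lambda>s. cv * LL * s powr (\<sigma>-1)) has_integral cv * LL * (bb powr \<sigma> / \<sigma>)) {0..bb}"
      by (rule has_integral_mult_right[OF powint0[OF sig_pos less_imp_le[OF b_pos]]])
  qed
  have val: "ff j bb * (bb * (KK0 * bb powr (\<sigma>-1)) + cv * LL * (bb powr \<sigma> / \<sigma>)) = ff j bb * (KK1 * bb powr \<sigma>)"
    using bb_sig by (simp add: algebra_simps)
  have g: "(?g has_integral (ff j bb * (KK1 * bb powr \<sigma>))) {xx(1-1)..xx 1}"
    unfolding cell1 val[symmetric] by (rule g0)
  have le: "\<bar>ff j s * (w s - dl 1)\<bar> \<le> ?g s" if s: "s \<in> {xx(1-1)..xx 1}" for s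
  proof -
    have s': "s \<in> {0..bb}" using s cell1 by simp
    have "ff j s \<le> ff j bb" using s' x_strict[of 1 j] a by (intro f_mono) auto
    moreover have "\<bar>ff j s * (w s - dl 1)\<bar> = ff j s * \<bar>w s - dl 1\<bar>"
      using f_nonneg[of j s] by (simp add: abs_mult)
    moreover have "0 \<le> ff j bb" by (rule f_nonneg)
    ultimately show ?thesis using mult_mono[OF _ psi_bound[OF s'], of "ff j s" "ff j bb"] f_nonneg[of j s] by simp
  qed
  show ?thesis using dom_lemma[OF _ _ _ g le] a by auto
qed

lemma prod_split: "0 \<le> s \<Longrightarrow> s \<le> bb \<Longrightarrow>
   (bb - s) powr (-\<alpha>) * s powr (\<sigma>-1) \<le> (bb/2) powr (-\<alpha>) * s powr (\<sigma>-1) + 2 * bb powr (\<sigma>-1) * (bb - s) powr (-\<alpha>)"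
proof -
  assume s: "0 \<le> s" "s \<le> bb"
  have n1: "0 \<le> 2 * bb powr (\<sigma>-1) * (bb - s) powr (-\<alpha>)" by simp
  have n2: "0 \<le> (bb/2) powr (-\<alpha>) * s powr (\<sigma>-1)" by simp
  show ?thesis
  proof (cases "s \<le> bb/2")
    case True
    have "(bb - s) powr (-\<alpha>) \<le> (bb/2) powr (-\<alpha>)" using True b_pos al0 by (intro powr_mono2') auto
    then have "(bb - s) powr (-\<alpha>) * s powr (\<sigma>-1) \<le> (bb/2) powr (-\<alpha>) * s powr (\<sigma>-1)"
      by (intro mult_right_mono) auto
    then show ?thesis using n1 by linarith
  next
    case False
    have "s powr (\<sigma>-1) \<le> 2 * bb powr (\<sigma>-1)"
    proof (cases "\<sigma> < 1")
      case True
      have "s powr (\<sigma>-1) \<le> (bb/2) powr (\<sigma>-1)" using True False b_pos by (intro powr_mono2') auto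
      also have "\<dots> = bb powr (\<sigma>-1) * 2 powr (1-\<sigma>)"
      proof -
        have "(bb/2) powr (\<sigma>-1) = bb powr (\<sigma>-1) / 2 powr (\<sigma>-1)" using b_pos by (simp add: powr_divide)
        moreover have "2 powr (1-\<sigma>) = 1 / 2 powr (\<sigma>-1)" using powr_minus_divide[of 2 "\<sigma>-1"] by simp
        ultimately show ?thesis by simp
      qed
      also have "2 powr (1-\<sigma>) \<le> 2 powr 1" using sig_pos by (intro powr_mono) auto
      then have "bb powr (\<sigma>-1) * 2 powr (1-\<sigma>) \<le> bb powr (\<sigma>-1) * 2" by (intro mult_left_mono) auto
      finally show ?thesis by simp
    next
      case False
      then have "s powr (\<sigma>-1) \<le> bb powr (\<sigma>-1)" using s by (intro powr_mono2) auto
      then show ?thesis using powr_ge_zero[of bb "\<sigma>-1"] by linarith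
    qed
    then have "(bb - s) powr (-\<alpha>) * s powr (\<sigma>-1) \<le> (bb - s) powr (-\<alpha>) * (2 * bb powr (\<sigma>-1))"
      by (intro mult_left_mono) auto
    moreover have "(bb - s) powr (-\<alpha>) * (2 * bb powr (\<sigma>-1)) = 2 * bb powr (\<sigma>-1) * (bb - s) powr (-\<alpha>)"
      by simp
    ultimately show ?thesis using n2 by linarith
  qed
qed


lemma aux_div: "d \<noteq> 0 \<Longrightarrow> g \<noteq> 0 \<Longrightarrow> (a*Q/d + b*Q/d)/g = (a+b)*Q/(d*g)" for a b d g Q :: real
  by (simp add: field_simps)

lemma gne: "GG \<noteq> 0" using GGpos by (metis less_irrefl)

lemma cell_1_1: "(\<lambda>s. ff 1 s * (w s - dl 1)) integrable_on {xx(1-1)..xx 1} \<and> \<bar>Icell 1 1\<bar> \<le> KK2 * bb powr \<sigma> * AA 1 1"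
proof -
  define C where "C = (KK0 + 2*cv*LL) * bb powr (\<sigma>-1)"
  define E where "E = cv * LL * (bb/2) powr (-\<alpha>)"
  let ?D = "\<lambda>s. (C * (bb - s) powr (-\<alpha>) + E * s powr (\<sigma>-1)) / GG"
  let ?I = "(C * (bb powr (1-\<alpha>) / (1-\<alpha>)) + E * (bb powr \<sigma> / \<sigma>)) / GG"
  have p1: "((\<lambda>s. (bb - s) powr (-\<alpha>)) has_integral bb powr (1-\<alpha>) / (1-\<alpha>)) {0..bb}"
    using powint[OF al0 al1, of 0 bb bb] b_pos by simp
  have p2: "((\<lambda>s. s powr (\<sigma>-1)) has_integral bb powr \<sigma> / \<sigma>) {0..bb}"
    by (rule powint0[OF sig_pos less_imp_le[OF b_pos]])
  have g0: "(?D has_integral ?I) {0..bb}"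
    by (rule has_integral_divide, rule has_integral_add, rule has_integral_mult_right[OF p1], rule has_integral_mult_right[OF p2])
  have g: "(?D has_integral ?I) {xx(1-1)..xx 1}" unfolding cell1 by (rule g0)
  have le: "\<bar>ff 1 s * (w s - dl 1)\<bar> \<le> ?D s" if s: "s \<in> {xx(1-1)..xx 1}" for s
  proof -
    have s': "s \<in> {0..bb}" using s cell1 by simp
    have fe: "ff 1 s = (bb - s) powr (-\<alpha>) / GG" using s' by (intro f_eq) auto
    have "\<bar>ff 1 s * (w s - dl 1)\<bar> = ff 1 s * \<bar>w s - dl 1\<bar>"
      using f_nonneg[of 1 s] by (simp add: abs_mult)
    also have "\<dots> \<le> ff 1 s * (KK0 * bb powr (\<sigma>-1) + cv * LL * s powr (\<sigma>-1))"
      by (rule mult_left_mono[OF psi_bound[OF s'] f_nonneg])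
    also have "\<dots> = (KK0 * bb powr (\<sigma>-1) * (bb - s) powr (-\<alpha>) + cv * LL * ((bb - s) powr (-\<alpha>) * s powr (\<sigma>-1))) / GG"
      unfolding fe by (simp only: times_divide_eq_left) (rule arg_cong[where f="\<lambda>z. z / GG"], simp add: algebra_simps)
    also have "\<dots> \<le> (KK0 * bb powr (\<sigma>-1) * (bb - s) powr (-\<alpha>) + cv * LL * ((bb/2) powr (-\<alpha>) * s powr (\<sigma>-1) + 2 * bb powr (\<sigma>-1) * (bb - s) powr (-\<alpha>))) / GG"
      using prod_split[of s] s' cvp GGpos by (intro divide_right_mono add_left_mono mult_left_mono) auto
    also have "\<dots> = ?D s" unfolding C_def E_def by (rule arg_cong[where f="\<lambda>z. z / GG"], simp add: algebra_simps)
    finally show ?thesis .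
  qed
  have main: "(\<lambda>s. ff 1 s * (w s - dl 1)) integrable_on {xx(1-1)..xx 1} \<and> \<bar>Icell 1 1\<bar> \<le> ?I"
    using dom_lemma[OF _ _ _ g le] N1 by auto
  define Q where "Q = bb powr \<sigma> * bb powr (-\<alpha>)"
  have Qp: "0 \<le> Q" unfolding Q_def by simp
  have e1: "bb powr (\<sigma>-1) * bb powr (1-\<alpha>) = Q"
    unfolding Q_def using b_pos by (simp add: powr_add[symmetric])
  have e2: "(bb/2) powr (-\<alpha>) = bb powr (-\<alpha>) * 2 powr \<alpha>"
  proof -
    have "(bb/2) powr (-\<alpha>) = bb powr (-\<alpha>) / 2 powr (-\<alpha>)" using b_pos by (simp add: powr_divide)
    moreover have "2 powr (-\<alpha>) = 1 / 2 powr \<alpha>" by (rule powr_minus_divide)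
    ultimately show ?thesis by simp
  qed
  have two: "2 powr \<alpha> \<le> 2" using powr_mono[of \<alpha> 1 2] al1 by simp
  have e3: "(bb/2) powr (-\<alpha>) * bb powr \<sigma> \<le> 2 * Q"
  proof -
    have "(bb/2) powr (-\<alpha>) * bb powr \<sigma> = 2 powr \<alpha> * Q" unfolding e2 Q_def by (simp add: algebra_simps)
    also have "\<dots> \<le> 2 * Q" using two Qp by (rule mult_right_mono)
    finally show ?thesis .
  qed
  have cL: "0 \<le> cv * LL" using cvp by simp
  have oa: "1 \<le> 1 / (1-\<alpha>)" using al0 al1 by simp
  have "C * (bb powr (1-\<alpha>) / (1-\<alpha>)) = (KK0 + 2*cv*LL) * Q / (1-\<alpha>)"
    unfolding C_def e1[symmetric] by (simp only: times_divide_eq_right mult.assoc)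
  moreover have "E * (bb powr \<sigma> / \<sigma>) \<le> (2*cv*LL/\<sigma>) * Q / (1-\<alpha>)"
  proof -
    have "E * (bb powr \<sigma> / \<sigma>) = cv * LL * ((bb/2) powr (-\<alpha>) * bb powr \<sigma>) / \<sigma>"
      unfolding E_def by (simp add: algebra_simps)
    also have "\<dots> \<le> cv * LL * (2 * Q) / \<sigma>"
      using e3 cL sig_pos by (intro divide_right_mono mult_left_mono) auto
    also have "\<dots> = (2*cv*LL/\<sigma>) * Q * 1" by (simp add: algebra_simps)
    also have "\<dots> \<le> (2*cv*LL/\<sigma>) * Q * (1 / (1-\<alpha>))"
      using oa cL sig_pos Qp by (intro mult_left_mono) auto
    finally show ?thesis by simp
  qed
  ultimately have "?I \<le> ((KK0 + 2*cv*LL) * Q / (1-\<alpha>) + (2*cv*LL/\<sigma>) * Q / (1-\<alpha>)) / GG"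
    using GGpos by (intro divide_right_mono) auto
  also have "\<dots> = KK2 * Q / ((1-\<alpha>)*GG)"
    using al1 by (intro aux_div[OF _ gne]) auto
  also have "\<dots> = KK2 * bb powr \<sigma> * AA 1 1"
  proof -
    have "AA 1 1 = bb powr (-\<alpha>)/((1-\<alpha>)*GG)" using A_diag[of 1] N1 h1 by simp
    then show ?thesis unfolding Q_def by (simp only: times_divide_eq_right mult.assoc)
  qed
  finally show ?thesis using main by linarith
qed

end



context cset begin

lemma cell_int: "1 \<le> k \<Longrightarrow> k \<le> j \<Longrightarrow> j \<le> N \<Longrightarrow>
   (\<lambda>s. ff j s * (w s - dl k)) integrable_on {xx(k-1)..xx k}"
proof -
  assume a: "1 \<le> k" "k \<le> j" "j \<le> N"
  show ?thesis
  proof (cases "k = 1")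
    case True
    show ?thesis
    proof (cases "j = 1")
      case True
      then show ?thesis using cell_1_1 \<open>k = 1\<close> by simp
    next
      case False
      then show ?thesis using cell_1_j[of j] \<open>k = 1\<close> a by simp
    qed
  next
    case False
    then show ?thesis using cell_k_int[of k j] a by simp
  qed
qed

lemma cell_prod: "1 \<le> k \<Longrightarrow> k \<le> j \<Longrightarrow> j \<le> N \<Longrightarrow>
   ((\<lambda>s. ff j s * w s) has_integral (Icell j k + AA j k * (v (xx k) - v (xx (k-1))))) {xx(k-1)..xx k}"
proof -
  assume a: "1 \<le> k" "k \<le> j" "j \<le> N"
  have i1: "((\<lambda>s. ff j s * (w s - dl k)) has_integral Icell j k) {xx(k-1)..xx k}"
    unfolding Icell_def using cell_int[OF a] by (rule integrable_integral)
  have i2: "((\<lambda>s. dl k * ff j s) has_integral dl k * (hh k * AA j k)) {xx(k-1)..xx k}"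
    using f_hasint[OF a] by (rule has_integral_mult_right)
  have "((\<lambda>s. ff j s * (w s - dl k) + dl k * ff j s) has_integral (Icell j k + dl k * (hh k * AA j k))) {xx(k-1)..xx k}"
    by (rule has_integral_add[OF i1 i2])
  then have X: "((\<lambda>s. ff j s * w s) has_integral (Icell j k + dl k * (hh k * AA j k))) {xx(k-1)..xx k}"
    by (rule has_integral_cong[THEN iffD1, rotated]) (simp add: algebra_simps)
  have eq: "dl k * (hh k * AA j k) = AA j k * (v (xx k) - v (xx (k-1)))"
    using h_pos[of k] a unfolding dl_def by simp
  show ?thesis using X unfolding eq .
qed

lemma prod_sum: "m \<le> j \<Longrightarrow> j \<le> N \<Longrightarrow>
   ((\<lambda>s. ff j s * w s) has_integral (\<Sum>k=1..m. Icell j k + AA j k * (v (xx k) - v (xx (k-1))))) {0..xx m}"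
proof (induction m)
  case 0
  then show ?case using x0 has_integral_refl(2)[of "\<lambda>s. ff j s * w s" 0] by simp
next
  case (Suc m)
  have "((\<lambda>s. ff j s * w s) has_integral
     (\<Sum>k=1..m. Icell j k + AA j k * (v (xx k) - v (xx (k-1)))) + (Icell j (Suc m) + AA j (Suc m) * (v (xx (Suc m)) - v (xx (Suc m - 1))))) {0..xx (Suc m)}"
  proof (rule has_integral_combine)
    show "0 \<le> xx m" using x_rng[of m] Suc.prems by auto
    show "xx m \<le> xx (Suc m)" using x_mono[of m "Suc m"] Suc.prems by auto
    show "((\<lambda>s. ff j s * w s) has_integral (\<Sum>k=1..m. Icell j k + AA j k * (v (xx k) - v (xx (k-1))))) {0..xx m}"
      using Suc by auto
    show "((\<lambda>s. ff j s * w s) has_integral (Icell j (Suc m) + AA j (Suc m) * (v (xx (Suc m)) - v (xx (Suc m - 1))))) {xx m..xx (Suc m)}"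
      using cell_prod[of "Suc m" j] Suc.prems by simp
  qed
  then show ?case by simp
qed

lemma R_rep: "1 \<le> j \<Longrightarrow> j \<le> N \<Longrightarrow> Rerr \<alpha> t v v1 j = (\<Sum>k=1..j. Icell j k)"
proof -
  assume a: "1 \<le> j" "j \<le> N"
  have "caputo \<alpha> v1 (xx j) = integral {0..xx j} (\<lambda>s. ff j s * v1 s)" unfolding caputo_def by simp
  also have "\<dots> = integral {0..xx j} (\<lambda>s. ff j s * w s)"
    by (rule integral_spike[of "{0}"]) (auto simp: w_def)
  also have "\<dots> = (\<Sum>k=1..j. Icell j k + AA j k * (v (xx k) - v (xx (k-1))))"
    using prod_sum[of j j] a by (simp add: integral_unique)
  finally show ?thesis unfolding Rerr_def by (simp add: sum.distrib)
qed


abbreviation "mm k \<equiv> (xx k - xx 1) powr \<alpha> * xx (k-1) powr (\<sigma>-2) * hh k powr (2-\<alpha>)"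
abbreviation "C3 \<equiv> cv * (T powr (2-\<sigma>) + 1)"

lemma SS_bound: "2 \<le> k \<Longrightarrow> k \<le> N \<Longrightarrow> SS k \<le> C3 * xx (k-1) powr (\<sigma>-2)"
proof -
  assume a: "2 \<le> k" "k \<le> N"
  have xp: "0 < xx (k-1)" "xx (k-1) \<le> T" using x_pos[of "k-1"] x_rng[of "k-1"] a by auto
  have "T powr (\<sigma>-2) \<le> xx (k-1) powr (\<sigma>-2)" using xp sig_lt2 by (intro powr_mono2') auto
  then have "T powr (2-\<sigma>) * T powr (\<sigma>-2) \<le> T powr (2-\<sigma>) * xx (k-1) powr (\<sigma>-2)"
    by (intro mult_left_mono) auto
  moreover have "T powr (2-\<sigma>) * T powr (\<sigma>-2) = 1" using T0 by (simp add: powr_add[symmetric])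
  ultimately have "1 \<le> T powr (2-\<sigma>) * xx (k-1) powr (\<sigma>-2)" by simp
  then have "1 + xx (k-1) powr (\<sigma>-2) \<le> (T powr (2-\<sigma>) + 1) * xx (k-1) powr (\<sigma>-2)"
    by (simp add: algebra_simps)
  then show ?thesis using cvp by (simp add: mult.assoc mult_left_mono)
qed

lemma HA_bound: "2 \<le> k \<Longrightarrow> k \<le> N \<Longrightarrow> hh k * hh k * SS k * AA k k \<le> C3 / (1-\<alpha>) * AA k 2 * mm k"
proof -
  assume a: "2 \<le> k" "k \<le> N"
  define D where "D = xx k - xx 1"
  have Dp: "0 < D" unfolding D_def using x_strict[of 1 k] a by auto
  have hp: "0 < hh k" using h_pos a by auto
  have e1: "hh k * hh k * hh k powr (-\<alpha>) = hh k powr (2-\<alpha>)"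
  proof -
    have "hh k powr (2-\<alpha>) = hh k powr 2 * hh k powr (-\<alpha>)" using powr_add[of "hh k" 2 "-\<alpha>"] by simp
    moreover have "hh k powr 2 = hh k * hh k" using hp by (simp add: powr_numeral power2_eq_square)
    ultimately show ?thesis by simp
  qed
  have fe: "ff k (xx 1) = D powr (-\<alpha>) / GG" unfolding D_def using x_strict[of 1 k] a by (intro f_eq) auto
  have e2: "1 / GG = D powr \<alpha> * ff k (xx 1)"
  proof -
    have "D powr \<alpha> * D powr (-\<alpha>) = 1" using Dp by (simp add: powr_add[symmetric])
    then show ?thesis unfolding fe by (simp add: field_simps)
  qed
  have al2: "ff k (xx 1) \<le> AA k 2" using A_lower[of 1 k] a by (simp add: numeral_2_eq_2)
  have "hh k * hh k * SS k * AA k k = SS k * (hh k * hh k * hh k powr (-\<alpha>)) / (1-\<alpha>) * (1 / GG)"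
    using A_diag[of k] a by (simp add: field_simps)
  also have "\<dots> = SS k * hh k powr (2-\<alpha>) * D powr \<alpha> / (1-\<alpha>) * ff k (xx 1)"
    unfolding e1 e2 by simp
  also have "\<dots> \<le> SS k * hh k powr (2-\<alpha>) * D powr \<alpha> / (1-\<alpha>) * AA k 2"
    using al2 a SS_nonneg[of k] al1 by (intro mult_left_mono) auto
  also have "\<dots> \<le> C3 * xx (k-1) powr (\<sigma>-2) * hh k powr (2-\<alpha>) * D powr \<alpha> / (1-\<alpha>) * AA k 2"
    using SS_bound[OF a] al1 A_pos[of 2 k] a
    by (intro mult_right_mono divide_right_mono) auto
  also have "\<dots> = C3 / (1-\<alpha>) * AA k 2 * mm k" unfolding D_def by (simp add: field_simps)
  finally show ?thesis .
qed


lemma KK1_nonneg: "0 \<le> KK1" using KK0_nonneg cvp sig_pos by simp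
lemma KK2_nonneg: "0 \<le> KK2" using KK0_nonneg cvp sig_pos by simp

lemma main_bound:
  assumes n: "1 \<le> n" "n \<le> N"
  shows "(\<Sum>j=1..n. dcc \<alpha> t n (n-j) * \<bar>Rerr \<alpha> t v v1 j\<bar>)
     \<le> (KK1 + KK2) * bb powr \<sigma> + 2 * C3 / (1-\<alpha>) * (if n < 2 then 0 else Max (mm ` {2..n}))"
proof -
  define P where "P j = dcc \<alpha> t n (n-j)" for j
  define M where "M = (if n < 2 then 0 else Max (mm ` {2..n}))"
  define H where "H k = hh k * hh k * SS k" for k
  define Bd where "Bd j k = (if k = 1 then (if j = 1 then KK2 * bb powr \<sigma> * AA 1 1 else KK1 * bb powr \<sigma> * AA j 2)
      else if k = j then H k * AA k k else H k * (AA j (k+1) - AA j k))" for j k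
  have Pn: "0 \<le> P j" if "1 \<le> j" "j \<le> n" for j
    unfolding P_def using that n by (intro dcc_nonneg) auto
  have Hn: "0 \<le> H k" for k unfolding H_def using SS_nonneg[of k] by simp
  have IB: "\<bar>Icell j k\<bar> \<le> Bd j k" if "1 \<le> k" "k \<le> j" "j \<le> n" for j k
  proof (cases "k = 1")
    case True
    show ?thesis
    proof (cases "j = 1")
      case True
      then show ?thesis using cell_1_1 \<open>k = 1\<close> unfolding Bd_def by simp
    next
      case False
      have "\<bar>Icell j 1\<bar> \<le> ff j bb * (KK1 * bb powr \<sigma>)" using cell_1_j[of j] False that n by auto
      also have "\<dots> \<le> AA j 2 * (KK1 * bb powr \<sigma>)"
        using A_lower[of 1 j] False that n KK1_nonneg by (intro mult_right_mono) (auto simp: numeral_2_eq_2)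
      finally show ?thesis using \<open>k = 1\<close> False unfolding Bd_def by (simp add: algebra_simps)
    qed
  next
    case False
    show ?thesis
    proof (cases "k = j")
      case True
      then show ?thesis using cell_k_int[of k j] False that n unfolding Bd_def H_def by (simp add: algebra_simps)
    next
      case False
      then show ?thesis using cell_k_lt[of k j] \<open>k \<noteq> 1\<close> that n unfolding Bd_def H_def by simp
    qed
  qed
  have RB: "\<bar>Rerr \<alpha> t v v1 j\<bar> \<le> (\<Sum>k=1..j. Bd j k)" if "1 \<le> j" "j \<le> n" for j
  proof -
    have "\<bar>Rerr \<alpha> t v v1 j\<bar> = \<bar>\<Sum>k=1..j. Icell j k\<bar>" using R_rep[of j] that n by simp
    also have "\<dots> \<le> (\<Sum>k=1..j. \<bar>Icell j k\<bar>)" by (rule sum_abs)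
    also have "\<dots> \<le> (\<Sum>k=1..j. Bd j k)" using IB that by (intro sum_mono) auto
    finally show ?thesis .
  qed
  have "(\<Sum>j=1..n. dcc \<alpha> t n (n-j) * \<bar>Rerr \<alpha> t v v1 j\<bar>) \<le> (\<Sum>j=1..n. P j * (\<Sum>k=1..j. Bd j k))"
    unfolding P_def[symmetric] using RB Pn by (intro sum_mono mult_left_mono) auto
  also have "\<dots> = (\<Sum>j=1..n. \<Sum>k=1..j. P j * Bd j k)" by (simp add: sum_distrib_left)
  also have "\<dots> = (\<Sum>k=1..n. \<Sum>j=k..n. P j * Bd j k)" by (rule sum_swap_tri)
  also have "\<dots> = (\<Sum>j=1..n. P j * Bd j 1) + (\<Sum>k=2..n. \<Sum>j=k..n. P j * Bd j k)"
    using n by (simp add: sum.atLeast_Suc_atMost numeral_2_eq_2)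
  also have "\<dots> \<le> (KK1 + KK2) * bb powr \<sigma> + 2 * C3 / (1-\<alpha>) * M"
  proof (rule add_mono)
    have s1: "P 1 * AA 1 1 \<le> 1"
    proof -
      have "P 1 * AA 1 1 \<le> (\<Sum>j=1..n. P j * AA j 1)"
      proof (rule member_le_sum[where f="\<lambda>j. P j * AA j 1"])
        show "1 \<in> {1..n}" using n by auto
        show "finite {1..n}" by simp
        fix j assume j: "j \<in> {1..n} - {1}"
        then have "0 \<le> P j" "0 < AA j 1" using Pn[of j] A_pos[of 1 j] n by auto
        then show "0 \<le> P j * AA j 1" by simp
      qed
      also have "\<dots> = 1" unfolding P_def using dcc_sum[of n 1] n by simp
      finally show ?thesis .
    qed
    have s2: "(\<Sum>j=2..n. P j * AA j 2) \<le> 1"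
    proof (cases "n < 2")
      case True then show ?thesis by simp
    next
      case False
      then show ?thesis unfolding P_def using dcc_sum[of n 2] n by simp
    qed
    have "(\<Sum>j=1..n. P j * Bd j 1) = P 1 * Bd 1 1 + (\<Sum>j=2..n. P j * Bd j 1)"
      using n by (simp add: sum.atLeast_Suc_atMost numeral_2_eq_2)
    also have "(\<Sum>j=2..n. P j * Bd j 1) = KK1 * bb powr \<sigma> * (\<Sum>j=2..n. P j * AA j 2)"
      unfolding sum_distrib_left by (intro sum.cong) (auto simp: Bd_def)
    also have "P 1 * Bd 1 1 = KK2 * bb powr \<sigma> * (P 1 * AA 1 1)" unfolding Bd_def by simp
    also have "KK2 * bb powr \<sigma> * (P 1 * AA 1 1) + KK1 * bb powr \<sigma> * (\<Sum>j=2..n. P j * AA j 2)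
        \<le> KK2 * bb powr \<sigma> * 1 + KK1 * bb powr \<sigma> * 1"
      by (rule add_mono[OF mult_left_mono[OF s1 mult_nonneg_nonneg[OF KK2_nonneg powr_ge_zero]]
                           mult_left_mono[OF s2 mult_nonneg_nonneg[OF KK1_nonneg powr_ge_zero]]])
    finally show "(\<Sum>j=1..n. P j * Bd j 1) \<le> (KK1 + KK2) * bb powr \<sigma>" by (simp add: algebra_simps)
  next
    have Mn: "0 \<le> M"
    proof (cases "n < 2")
      case True then show ?thesis unfolding M_def by simp
    next
      case False
      have mem: "mm 2 \<in> mm ` {2..n}" by (rule imageI) (use False in auto)
      have "mm 2 \<le> Max (mm ` {2..n})" by (rule Max_ge[OF _ mem]) simp
      moreover have "0 \<le> mm 2" by simp
      ultimately have "0 \<le> Max (mm ` {2..n})" by (rule order_trans[rotated])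
      then show ?thesis unfolding M_def using False by simp
    qed
    have mM: "mm k \<le> M" if "2 \<le> k" "k \<le> n" for k
      unfolding M_def using that by (auto intro!: Max_ge)
    have Fk: "(\<Sum>j=k..n. P j * Bd j k) \<le> 2 * C3 / (1-\<alpha>) * M * (P k * AA k 2)" if k: "2 \<le> k" "k \<le> n" for k
    proof -
      have "(\<Sum>j=k..n. P j * Bd j k) = P k * Bd k k + (\<Sum>j=k+1..n. P j * Bd j k)"
        using k by (simp add: sum.atLeast_Suc_atMost)
      also have "(\<Sum>j=k+1..n. P j * Bd j k) = H k * (\<Sum>j=k+1..n. (AA j (k+1) - AA j k) * P j)"
        unfolding sum_distrib_left using k by (intro sum.cong) (auto simp: Bd_def)
      also have "H k * (\<Sum>j=k+1..n. (AA j (k+1) - AA j k) * P j) \<le> H k * (P k * AA k k)"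
      proof (cases "k < n")
        case True
        then show ?thesis using dcc_rec[of n k] k n unfolding P_def by simp
      next
        case False
        then show ?thesis using Hn[of k] Pn[of k] A_pos[of k k] k n by auto
      qed
      finally have "(\<Sum>j=k..n. P j * Bd j k) \<le> P k * Bd k k + H k * (P k * AA k k)" by simp
      also have "\<dots> = 2 * P k * (H k * AA k k)" using k unfolding Bd_def by (simp add: algebra_simps)
      also have "\<dots> \<le> 2 * P k * (C3 / (1-\<alpha>) * AA k 2 * mm k)"
        using HA_bound[of k] k n Pn[of k] unfolding H_def by (intro mult_left_mono) auto
      also have "\<dots> \<le> 2 * P k * (C3 / (1-\<alpha>) * AA k 2 * M)"
        using mM[OF k] k n Pn[of k] A_pos[of 2 k] cvp al1 powr_ge_zero[of T "2-\<sigma>"]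
        by (intro mult_left_mono) (auto intro!: mult_nonneg_nonneg)
      also have "\<dots> = 2 * C3 / (1-\<alpha>) * M * (P k * AA k 2)" by (simp add: algebra_simps)
      finally show ?thesis .
    qed
    have "(\<Sum>k=2..n. \<Sum>j=k..n. P j * Bd j k) \<le> (\<Sum>k=2..n. 2 * C3 / (1-\<alpha>) * M * (P k * AA k 2))"
      using Fk by (intro sum_mono) auto
    also have "\<dots> = 2 * C3 / (1-\<alpha>) * M * (\<Sum>k=2..n. P k * AA k 2)" by (simp add: sum_distrib_left)
    also have "\<dots> \<le> 2 * C3 / (1-\<alpha>) * M * 1"
    proof (rule mult_left_mono)
      show "(\<Sum>k=2..n. P k * AA k 2) \<le> 1"
      proof (cases "n < 2")
        case True then show ?thesis by simp
      next
        case False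
        then show ?thesis unfolding P_def using dcc_sum[of n 2] n by simp
      qed
      show "0 \<le> 2 * C3 / (1-\<alpha>) * M" using Mn cvp al1 powr_ge_zero[of T "2-\<sigma>"] by (auto intro!: mult_nonneg_nonneg)
    qed
    finally show "(\<Sum>k=2..n. \<Sum>j=k..n. P j * Bd j k) \<le> 2 * C3 / (1-\<alpha>) * M" by simp
  qed
  finally show ?thesis unfolding M_def .
qed


end

definition CCf :: "real \<Rightarrow> real \<Rightarrow> real \<Rightarrow> real" where
  "CCf cv \<sigma> T = (cv * (2 * T powr (2-\<sigma>) + 1 / \<bar>\<sigma> - 1\<bar> * (2 + 1/\<sigma>)) + cv * (1 / \<bar>\<sigma> - 1\<bar>) / \<sigma>)
     + (cv * (2 * T powr (2-\<sigma>) + 1 / \<bar>\<sigma> - 1\<bar> * (2 + 1/\<sigma>)) + 2 * cv * (1 / \<bar>\<sigma> - 1\<bar>) + 2 * cv * (1 / \<bar>\<sigma> - 1\<bar>) / \<sigma>)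
     + 2 * (cv * (T powr (2-\<sigma>) + 1))"

lemma CCf_pos: "0 < cv \<Longrightarrow> 0 < \<sigma> \<Longrightarrow> 0 < CCf cv \<sigma> T"
  unfolding CCf_def
  by (intro add_nonneg_pos add_nonneg_nonneg mult_pos_pos mult_nonneg_nonneg divide_nonneg_nonneg add_pos_nonneg) auto

context cset begin

lemma final:
  assumes n: "1 \<le> n" "n \<le> N"
  shows "(\<Sum>j=1..n. dcc \<alpha> t n (n-j) * \<bar>Rerr \<alpha> t v v1 j\<bar>)
     \<le> CCf cv \<sigma> T * (tau t 1 powr \<sigma> + 1 / (1 - \<alpha>) *
                   (if n < 2 then 0
                    else Max ((\<lambda>j. (th t j - th t 1) powr \<alpha> * th t (j - 1) powr (\<sigma> - 2)
                                    * tauh t j powr (2 - \<alpha>)) ` {2..n})))"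
proof -
  define M where "M = (if n < 2 then 0 else Max (mm ` {2..n}))"
  define A where "A = KK1 + KK2"
  define B where "B = 2 * C3"
  define q where "q = 1 / (1 - \<alpha>)"
  have CC: "CCf cv \<sigma> T = A + B" unfolding CCf_def A_def B_def by simp
  have A0: "0 \<le> A" unfolding A_def by (rule add_nonneg_nonneg[OF KK1_nonneg KK2_nonneg])
  have B0: "0 \<le> B" unfolding B_def using cvp powr_ge_zero[of T "2-\<sigma>"] by simp
  have q0: "0 < q" unfolding q_def using al1 by simp
  have Mn: "0 \<le> M"
  proof (cases "n < 2")
    case True then show ?thesis unfolding M_def by simp
  next
    case False
    have mem: "mm 2 \<in> mm ` {2..n}" by (rule imageI) (use False in auto)
    have "mm 2 \<le> Max (mm ` {2..n})" by (rule Max_ge[OF _ mem]) simp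
    moreover have "0 \<le> mm 2" by simp
    ultimately have "0 \<le> Max (mm ` {2..n})" by (rule order_trans[rotated])
    then show ?thesis unfolding M_def using False by simp
  qed
  have bt: "bb powr \<sigma> \<le> tau t 1 powr \<sigma>"
  proof -
    have "bb = tau t 1 / 2" by (simp add: th_def t0)
    then have "bb \<le> tau t 1" using b_pos by simp
    then show ?thesis using b_pos sig_pos by (intro powr_mono2) auto
  qed
  have "(\<Sum>j=1..n. dcc \<alpha> t n (n-j) * \<bar>Rerr \<alpha> t v v1 j\<bar>) \<le> A * bb powr \<sigma> + B * (q * M)"
    using main_bound[OF n] unfolding M_def A_def B_def q_def by (simp add: algebra_simps)
  also have "\<dots> \<le> A * tau t 1 powr \<sigma> + B * (q * M)"
    using bt A0 by (intro add_right_mono mult_left_mono) auto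
  also have "\<dots> \<le> (A + B) * (tau t 1 powr \<sigma> + q * M)"
  proof -
    have "0 \<le> B * tau t 1 powr \<sigma>" using B0 by simp
    moreover have "0 \<le> A * (q * M)" using A0 q0 Mn by simp
    ultimately show ?thesis by (simp add: algebra_simps)
  qed
  finally show ?thesis unfolding CC q_def M_def by simp
qed

end

theorem corollary2p1:
  fixes cv \<sigma> T :: real
  assumes "cv > 0" and "(0 < \<sigma> \<and> \<sigma> < 1) \<or> (1 < \<sigma> \<and> \<sigma> < 2)" and "T > 0"
  shows "\<exists>C > 0. \<forall>(\<alpha>::real) (N::nat) (t::nat \<Rightarrow> real) (v::real \<Rightarrow> real) v1 v2.
     (0 < \<alpha> \<and> \<alpha> < 1 \<and> N \<ge> 1 \<and> t 0 = 0 \<and> t N = T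
      \<and> (\<forall>n. 1 \<le> n \<and> n \<le> N \<longrightarrow> t (n - 1) < t n)
      \<and> (\<forall>n. 2 \<le> n \<and> n \<le> N \<longrightarrow> tau t (n - 1) \<le> tau t n)
      \<and> continuous_on {0..T} v
      \<and> (\<forall>s\<in>{0<..T}. (v has_real_derivative v1 s) (at s within {0<..T}))
      \<and> (\<forall>s\<in>{0<..T}. (v1 has_real_derivative v2 s) (at s within {0<..T}))
      \<and> continuous_on {0<..T} v2
      \<and> (\<forall>s\<in>{0<..T}. \<bar>v2 s\<bar> \<le> cv * (1 + s powr (\<sigma> - 2))))
     \<longrightarrow> (\<forall>n. 1 \<le> n \<and> n \<le> N \<longrightarrow>
           (\<Sum>j = 1..n. dcc \<alpha> t n (n - j) * \<bar>Rerr \<alpha> t v v1 j\<bar>)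
           \<le> C * (tau t 1 powr \<sigma>
                 + 1 / (1 - \<alpha>) *
                   (if n < 2 then 0
                    else Max ((\<lambda>j. (th t j - th t 1) powr \<alpha> * th t (j - 1) powr (\<sigma> - 2)
                                    * tauh t j powr (2 - \<alpha>)) ` {2..n}))))"
proof (rule exI[of _ "CCf cv \<sigma> T"], intro conjI allI impI)
  show "0 < CCf cv \<sigma> T" using assms by (intro CCf_pos) auto
  fix \<alpha> :: real and N :: nat and t :: "nat \<Rightarrow> real" and v v1 v2 :: "real \<Rightarrow> real" and n :: nat
  assume H: "0 < \<alpha> \<and> \<alpha> < 1 \<and> N \<ge> 1 \<and> t 0 = 0 \<and> t N = T
      \<and> (\<forall>n. 1 \<le> n \<and> n \<le> N \<longrightarrow> t (n - 1) < t n)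
      \<and> (\<forall>n. 2 \<le> n \<and> n \<le> N \<longrightarrow> tau t (n - 1) \<le> tau t n)
      \<and> continuous_on {0..T} v
      \<and> (\<forall>s\<in>{0<..T}. (v has_real_derivative v1 s) (at s within {0<..T}))
      \<and> (\<forall>s\<in>{0<..T}. (v1 has_real_derivative v2 s) (at s within {0<..T}))
      \<and> continuous_on {0<..T} v2
      \<and> (\<forall>s\<in>{0<..T}. \<bar>v2 s\<bar> \<le> cv * (1 + s powr (\<sigma> - 2)))"
    and nn: "1 \<le> n \<and> n \<le> N"
  interpret cset \<alpha> N t v v1 v2 cv \<sigma> T
    by unfold_locales (use H assms in auto)
  show "(\<Sum>j = 1..n. dcc \<alpha> t n (n - j) * \<bar>Rerr \<alpha> t v v1 j\<bar>)
           \<le> CCf cv \<sigma> T * (tau t 1 powr \<sigma>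
                 + 1 / (1 - \<alpha>) *
                   (if n < 2 then 0
                    else Max ((\<lambda>j. (th t j - th t 1) powr \<alpha> * th t (j - 1) powr (\<sigma> - 2)
                                    * tauh t j powr (2 - \<alpha>)) ` {2..n})))"
    using final nn by auto
qed

end
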